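(* For every $k\ge0$, every $n$-vertex graph of clique-width at most $k$ has a partial orientation $\vec{H}$ of maximum outdegree $O(k\log n)$ that is a weak $\infty$-guidance system.
   Context: All graphs are finite, simple and undirected. A partial orientation of $G$ is a directed graph $\vec{H}$ on $V(G)$ with every $(u,v)\in E(\vec{H})$ satisfying $uv\in E(G)$. $B_{\vec{H}}(v,a)$ is the set of vertices reachable from $v$ by a directed path of length at most $a$. A weak $r$-guidance system is a partial orientation $\vec{H}$ such that for any distinct $u,v$ at distance $\ell\le r$ in $G$ there exist non-negative integers $a,b$ with $a+b=\ell-1$ such that $G$ has an edge between $B_{\vec{H}}(u,a)$ and $B_{\vec{H}}(v,b)$; a weak $\infty$-guidance system is one that is a weak $r$-guidance system for every positive integer $r$. A $k$-labeled graph is a graph with each vertex labeled from $[k]$. Constructible $k$-labeled graphs are the smallest family containing all one-vertex $k$-labeled graphs and closed under disjoint unions, relabeling all vertices of label $i$ to label $j$, and adding all edges between vertices of labels $i$ and $j$. A graph has clique-width at most $k$ if its vertices can be labeled so that the resulting $k$-labeled graph is constructible. The $O(\cdot)$ hides an absolute constant. *)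

theory Defs
  imports Main "HOL-Library.Disjoint_Sets" Complex_Main
begin

definition simple_graph :: "'a set \<Rightarrow> ('a \<times> 'a) set \<Rightarrow> bool" where
  "simple_graph V E \<longleftrightarrow> finite V \<and> E \<subseteq> V \<times> V \<and> sym E \<and> irrefl E"

definition partial_orientation :: "('a \<times> 'a) set \<Rightarrow> ('a \<times> 'a) set \<Rightarrow> bool" where
  "partial_orientation E H \<longleftrightarrow> H \<subseteq> E"

definition outdeg :: "('a \<times> 'a) set \<Rightarrow> 'a \<Rightarrow> nat" where
  "outdeg H u = card {v. (u, v) \<in> H}"

definition out_ball :: "('a \<times> 'a) set \<Rightarrow> 'a \<Rightarrow> nat \<Rightarrow> 'a set" where
  "out_ball H v a = {w. \<exists>i\<le>a. (v, w) \<in> H ^^ i}"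

definition at_dist :: "('a \<times> 'a) set \<Rightarrow> 'a \<Rightarrow> 'a \<Rightarrow> nat \<Rightarrow> bool" where
  "at_dist E u v l \<longleftrightarrow> (u, v) \<in> E ^^ l \<and> (\<forall>m<l. (u, v) \<notin> E ^^ m)"

definition weak_guidance :: "'a set \<Rightarrow> ('a \<times> 'a) set \<Rightarrow> nat \<Rightarrow> ('a \<times> 'a) set \<Rightarrow> bool" where
  "weak_guidance V E r H \<longleftrightarrow> partial_orientation E H \<and>
     (\<forall>u\<in>V. \<forall>v\<in>V. \<forall>l. u \<noteq> v \<and> at_dist E u v l \<and> l \<le> r \<longrightarrow>
        (\<exists>a b. a + b = l - 1 \<and>
           (\<exists>x\<in>out_ball H u a. \<exists>y\<in>out_ball H v b. (x, y) \<in> E)))"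

definition weak_inf_guidance :: "'a set \<Rightarrow> ('a \<times> 'a) set \<Rightarrow> ('a \<times> 'a) set \<Rightarrow> bool" where
  "weak_inf_guidance V E H \<longleftrightarrow> (\<forall>r::nat. r \<ge> 1 \<longrightarrow> weak_guidance V E r H)"

text \<open>Constructible k-labeled graphs (V, E, lab), labels in {1..k};
  only the values of lab on V are relevant.\<close>
inductive cw_constructible :: "nat \<Rightarrow> 'a set \<Rightarrow> ('a \<times> 'a) set \<Rightarrow> ('a \<Rightarrow> nat) \<Rightarrow> bool"
  for k :: nat where
  single: "lab x \<in> {1..k} \<Longrightarrow> cw_constructible k {x} {} lab"
| union: "\<lbrakk>cw_constructible k V1 E1 lab1; cw_constructible k V2 E2 lab2; V1 \<inter> V2 = {}\<rbrakk>
     \<Longrightarrow> cw_constructible k (V1 \<union> V2) (E1 \<union> E2) (\<lambda>x. if x \<in> V1 then lab1 x else lab2 x)"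
| relabel: "\<lbrakk>cw_constructible k V E lab; i \<in> {1..k}; j \<in> {1..k}\<rbrakk>
     \<Longrightarrow> cw_constructible k V E (\<lambda>x. if lab x = i then j else lab x)"
| join: "\<lbrakk>cw_constructible k V E lab; i \<in> {1..k}; j \<in> {1..k}; i \<noteq> j\<rbrakk>
     \<Longrightarrow> cw_constructible k V
          (E \<union> {(x, y). x \<in> V \<and> y \<in> V \<and>
                 ((lab x = i \<and> lab y = j) \<or> (lab x = j \<and> lab y = i))}) lab"

definition cw_at_most :: "nat \<Rightarrow> 'a set \<Rightarrow> ('a \<times> 'a) set \<Rightarrow> bool" where
  "cw_at_most k V E \<longleftrightarrow> (\<exists>lab. cw_constructible k V E lab)"

end

theory Submission
  imports Defs
begin


definition ER :: "('a \<times> 'a) set \<Rightarrow> 'a set \<Rightarrow> ('a \<times> 'a) set" where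
  "ER E W = {(x,y). (x,y) \<in> E \<and> x \<in> W \<and> y \<in> W}"

definition nd :: "('a \<times> 'a) set \<Rightarrow> 'a set \<Rightarrow> 'a \<Rightarrow> nat" where
  "nd R S w = (LEAST n. \<exists>s\<in>S. (w,s) \<in> R^^n)"

definition nxt :: "('a \<times> 'a) set \<Rightarrow> 'a set \<Rightarrow> 'a \<Rightarrow> 'a" where
  "nxt R S w = (SOME w'. (w,w') \<in> R \<and> (\<exists>s\<in>S. (w',s) \<in> R^^(nd R S w - 1)))"

definition bfs :: "('a \<times> 'a) set \<Rightarrow> 'a set \<Rightarrow> ('a \<times> 'a) set" where
  "bfs R S = {(w, nxt R S w) | w. w \<notin> S \<and> (\<exists>n. \<exists>s\<in>S. (w,s) \<in> R^^n)}"

lemma nxt_prop: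
  assumes "w \<notin> S" "s \<in> S" "(w,s) \<in> R^^n"
  shows "(w, nxt R S w) \<in> R \<and> (\<exists>s\<in>S. (nxt R S w, s) \<in> R^^(nd R S w - 1))"
proof -
  have ex: "\<exists>n. \<exists>s\<in>S. (w,s) \<in> R^^n" using assms by blast
  have d: "\<exists>s\<in>S. (w,s) \<in> R^^(nd R S w)"
    unfolding nd_def by (rule LeastI_ex[OF ex])
  then obtain s' where s': "s' \<in> S" "(w,s') \<in> R^^(nd R S w)" by blast
  have "nd R S w \<noteq> 0" using s' assms(1) by (metis relpow_0_E)
  then obtain d' where dd: "nd R S w = Suc d'" by (cases "nd R S w") auto
  then obtain y where "(w,y) \<in> R" "(y,s') \<in> R^^d'" using s' relpow_Suc_D2 by metis
  then have "\<exists>w'. (w,w') \<in> R \<and> (\<exists>s\<in>S. (w',s) \<in> R^^(nd R S w - 1))"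
    using s' dd by auto
  then show ?thesis unfolding nxt_def by (rule someI_ex)
qed

lemma bfs_sub: "bfs R S \<subseteq> R"
proof
  fix p assume "p \<in> bfs R S"
  then obtain w n s where "p = (w, nxt R S w)" "w \<notin> S" "s \<in> S" "(w,s) \<in> R^^n"
    unfolding bfs_def by blast
  then show "p \<in> R" using nxt_prop[where w=w and S=S and s=s and R=R and n=n] by simp
qed

lemma bfs_out: "card {v. (w,v) \<in> bfs R S} \<le> 1"
proof -
  have "{v. (w,v) \<in> bfs R S} \<subseteq> {nxt R S w}"
  proof
    fix v assume "v \<in> {v. (w,v) \<in> bfs R S}"
    then obtain w' where "(w,v) = (w', nxt R S w')" unfolding bfs_def by blast
    then show "v \<in> {nxt R S w}" by simp
  qed
  from card_mono[OF _ this] show ?thesis by simp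
qed

lemma bfs_reach:
  "(w,s) \<in> R^^n \<Longrightarrow> s \<in> S \<Longrightarrow> \<exists>s'\<in>S. \<exists>i\<le>n. (w,s') \<in> (bfs R S)^^i"
proof (induction n arbitrary: w s rule: less_induct)
  case (less n)
  show ?case
  proof (cases "w \<in> S")
    case True
    then show ?thesis by (intro bexI[of _ w] exI[of _ 0]) auto
  next
    case False
    have np: "(w, nxt R S w) \<in> R \<and> (\<exists>s\<in>S. (nxt R S w, s) \<in> R^^(nd R S w - 1))"
      using nxt_prop[OF False less.prems(2) less.prems(1)] .
    have le: "nd R S w \<le> n" unfolding nd_def
      by (rule Least_le) (use less.prems in blast)
    have "nd R S w \<noteq> 0"
    proof
      assume "nd R S w = 0"
      have ex: "\<exists>n. \<exists>s\<in>S. (w,s) \<in> R^^n" using less.prems by blast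
      have "\<exists>s\<in>S. (w,s) \<in> R^^(nd R S w)"
        unfolding nd_def by (rule LeastI_ex[OF ex])
      with \<open>nd R S w = 0\<close> False show False by auto
    qed
    then have lt: "nd R S w - 1 < n" using le by linarith
    from np obtain s2 where s2: "s2 \<in> S" "(nxt R S w, s2) \<in> R^^(nd R S w - 1)" by blast
    from less.IH[OF lt s2(2) s2(1)] obtain s' i where
      si: "s' \<in> S" "i \<le> nd R S w - 1" "(nxt R S w, s') \<in> (bfs R S)^^i" by blast
    have "(w, nxt R S w) \<in> bfs R S" unfolding bfs_def using False less.prems by blast
    then have "(w, s') \<in> (bfs R S)^^(Suc i)" using si(3) by (rule relpow_Suc_I2)
    moreover have "Suc i \<le> n" using si(2) le \<open>nd R S w \<noteq> 0\<close> by linarith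
    ultimately show ?thesis using si(1) by blast
  qed
qed

lemma relpow_sym: "sym R \<Longrightarrow> (x,y) \<in> R^^n \<Longrightarrow> (y,x) \<in> R^^n"
proof (induction n arbitrary: x y)
  case 0 then show ?case by auto
next
  case (Suc n)
  then obtain z where "(x,z) \<in> R^^n" "(z,y) \<in> R" by auto
  then show ?case using Suc by (meson relpow_Suc_I2 symD)
qed

lemma relpow_mono': "(H::('a\<times>'a) set) \<subseteq> H' \<Longrightarrow> H^^i \<subseteq> H'^^i"
proof (induction i)
  case 0 show ?case by simp
next
  case (Suc i) then show ?case by (simp add: relcomp_mono)
qed

lemma out_ball_mono: "H \<subseteq> H' \<Longrightarrow> a \<le> a' \<Longrightarrow> x \<in> out_ball H u a \<Longrightarrow> x \<in> out_ball H' u a'"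
proof -
  assume h: "H \<subseteq> H'" "a \<le> a'" "x \<in> out_ball H u a"
  then obtain i where "i \<le> a" "(u,x) \<in> H^^i" unfolding out_ball_def by blast
  moreover have "H^^i \<subseteq> H'^^i" using h(1) by (rule relpow_mono')
  ultimately show ?thesis unfolding out_ball_def using h(2) by (auto intro!: exI[of _ i])
qed


lemma walk_split:
  assumes "A \<union> B = W" "A \<inter> B = {}" "u \<in> W" and uv: "(u,v) \<in> (ER E W)^^l"
  shows "(u \<in> A \<and> v \<in> A \<and> (u,v) \<in> (ER E A)^^l) \<or> (u \<in> B \<and> v \<in> B \<and> (u,v) \<in> (ER E B)^^l) \<or>
    (\<exists>x y p q. (u,x) \<in> (ER E W)^^p \<and> (x,y) \<in> ER E W \<and> (y,v) \<in> (ER E W)^^q \<and> p+q+1 = l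
       \<and> ((x \<in> A \<and> y \<in> B) \<or> (x \<in> B \<and> y \<in> A)))"
  using uv
proof (induction l arbitrary: v)
  case 0
  then show ?case using assms(1-3) by auto
next
  case (Suc l)
  from Suc.prems obtain w where w: "(u,w) \<in> (ER E W)^^l" "(w,v) \<in> ER E W" by auto
  have vW: "v \<in> W" "w \<in> W" using w(2) unfolding ER_def by auto
  from Suc.IH[OF w(1)] consider (a) "u \<in> A \<and> w \<in> A \<and> (u, w) \<in> (ER E A)^^l"
    | (b) "u \<in> B \<and> w \<in> B \<and> (u, w) \<in> (ER E B)^^l"
    | (c) "\<exists>x y p q. (u,x) \<in> (ER E W)^^p \<and> (x,y) \<in> ER E W \<and> (y,w) \<in> (ER E W)^^q \<and> p+q+1 = l
       \<and> ((x \<in> A \<and> y \<in> B) \<or> (x \<in> B \<and> y \<in> A))" by blast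
  then show ?case
  proof cases
    case a
    then have h: "u \<in> A" "w \<in> A" "(u, w) \<in> (ER E A)^^l" by auto
    show ?thesis
    proof (cases "v \<in> A")
      case True
      then have "(w,v) \<in> ER E A" using w(2) h(2) unfolding ER_def by auto
      then show ?thesis using h True by auto
    next
      case False
      then have "v \<in> B" using vW assms by auto
      then show ?thesis using h w False by (intro disjI2 exI[of _ w] exI[of _ v] exI[of _ l] exI[of _ 0]) auto
    qed
  next
    case b
    then have h: "u \<in> B" "w \<in> B" "(u, w) \<in> (ER E B)^^l" by auto
    show ?thesis
    proof (cases "v \<in> B")
      case True
      then have "(w,v) \<in> ER E B" using w(2) h(2) unfolding ER_def by auto
      then show ?thesis using h True by auto
    next
      case False
      then have "v \<in> A" using vW assms by auto
      then show ?thesis using h w False by (intro disjI2 exI[of _ w] exI[of _ v] exI[of _ l] exI[of _ 0]) auto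
    qed
  next
    case c
    then obtain x y p q where h: "(u, x) \<in> (ER E W)^^p" "(x, y) \<in> ER E W" "(y, w) \<in> (ER E W)^^q" "p + q + 1 = l"
      "x \<in> A \<and> y \<in> B \<or> x \<in> B \<and> y \<in> A" by blast
    have "(y,v) \<in> (ER E W)^^(Suc q)" using h(3) w(2) by auto
    then show ?thesis using h by (intro disjI2 exI[of _ x] exI[of _ y] exI[of _ p] exI[of _ "Suc q"]) auto
  qed
qed



definition twinfam :: "nat \<Rightarrow> 'a set \<Rightarrow> ('a \<times> 'a) set \<Rightarrow> ('a \<Rightarrow> nat) \<Rightarrow> 'a set set \<Rightarrow> bool" where
  "twinfam k V E lab F \<longleftrightarrow> (\<forall>X\<in>F. X \<subseteq> V \<and> (\<exists>c. c ` X \<subseteq> {1..k} \<and>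
      (\<forall>x\<in>X. \<forall>x'\<in>X. c x = c x' \<longrightarrow> lab x = lab x' \<and> (\<forall>y\<in>V-X. (x,y) \<in> E \<longleftrightarrow> (x',y) \<in> E))))"

lemma twinfamD:
  assumes "twinfam k V E lab F" "X \<in> F"
  obtains c where "X \<subseteq> V" "c ` X \<subseteq> {1..k}"
    "\<And>x x'. x \<in> X \<Longrightarrow> x' \<in> X \<Longrightarrow> c x = c x' \<Longrightarrow> lab x = lab x'"
    "\<And>x x' y. x \<in> X \<Longrightarrow> x' \<in> X \<Longrightarrow> c x = c x' \<Longrightarrow> y \<in> V - X \<Longrightarrow> (x,y) \<in> E \<longleftrightarrow> (x',y) \<in> E"
proof -
  have "X \<subseteq> V \<and> (\<exists>c. c ` X \<subseteq> {1..k} \<and>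
      (\<forall>x\<in>X. \<forall>x'\<in>X. c x = c x' \<longrightarrow> lab x = lab x' \<and> (\<forall>y\<in>V-X. (x,y) \<in> E \<longleftrightarrow> (x',y) \<in> E)))"
    using assms unfolding twinfam_def by (rule bspec)
  then obtain c where "X \<subseteq> V" "c ` X \<subseteq> {1..k}"
     "\<forall>x\<in>X. \<forall>x'\<in>X. c x = c x' \<longrightarrow> lab x = lab x' \<and> (\<forall>y\<in>V-X. (x,y) \<in> E \<longleftrightarrow> (x',y) \<in> E)"
    by (elim conjE exE)
  then show ?thesis using that by metis
qed

lemma twinfamI:
  assumes "\<And>X. X \<in> F \<Longrightarrow> X \<subseteq> V \<and> (\<exists>c. c ` X \<subseteq> {1..k} \<and>
      (\<forall>x\<in>X. \<forall>x'\<in>X. c x = c x' \<longrightarrow> lab x = lab x' \<and> (\<forall>y\<in>V-X. (x,y) \<in> E \<longleftrightarrow> (x',y) \<in> E)))"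
  shows "twinfam k V E lab F"
  using assms unfolding twinfam_def by (intro ballI)

definition balfam :: "'a set \<Rightarrow> 'a set set \<Rightarrow> bool" where
  "balfam V F \<longleftrightarrow> (\<forall>W (m::real). m \<ge> 3/2 \<and> real (card (W \<inter> V)) \<ge> m/3 \<longrightarrow>
      (\<exists>X\<in>F. m/3 \<le> real (card (W \<inter> X)) \<and> real (card (W \<inter> X)) \<le> 2*m/3))"

lemma cw_family:
  assumes "cw_constructible k V E lab"
  shows "finite V \<and> E \<subseteq> V \<times> V \<and> lab ` V \<subseteq> {1..k} \<and>
    (\<exists>F. V \<in> F \<and> twinfam k V E lab F \<and> balfam V F)"
  using assms
proof induction
  case (single lab x)
  have "twinfam k {x} {} lab {{x}}" unfolding twinfam_def
    using single by (intro ballI conjI exI[of _ lab]) auto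
  moreover have "balfam {x} {{x}}" unfolding balfam_def
  proof (intro allI impI)
    fix W and m :: real
    assume h: "3/2 \<le> m \<and> m/3 \<le> real (card (W \<inter> {x}))"
    have "card (W \<inter> {x}) \<le> 1" by (simp add: card_le_Suc0_iff_eq)
    then show "\<exists>X\<in>{{x}}. m/3 \<le> real (card (W \<inter> X)) \<and> real (card (W \<inter> X)) \<le> 2*m/3"
      using h by (cases "x \<in> W") auto
  qed
  ultimately show ?case using single by blast
next
  case (union V1 E1 lab1 V2 E2 lab2)
  from union.IH(1) obtain F1 where F1: "V1 \<in> F1" "twinfam k V1 E1 lab1 F1" "balfam V1 F1" by blast
  from union.IH(2) obtain F2 where F2: "V2 \<in> F2" "twinfam k V2 E2 lab2 F2" "balfam V2 F2" by blast
  let ?lab = "\<lambda>x. if x \<in> V1 then lab1 x else lab2 x"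
  let ?F = "insert (V1 \<union> V2) (F1 \<union> F2)"
  have fin: "finite (V1 \<union> V2)" using union.IH by auto
  have Esub: "E1 \<union> E2 \<subseteq> (V1 \<union> V2) \<times> (V1 \<union> V2)" using union.IH by auto
  have labs: "?lab ` (V1 \<union> V2) \<subseteq> {1..k}" using union.IH by auto
  have tw: "twinfam k (V1 \<union> V2) (E1 \<union> E2) ?lab ?F"
  proof (rule twinfamI)
    fix X assume X: "X \<in> ?F"
    show "X \<subseteq> V1 \<union> V2 \<and> (\<exists>c. c ` X \<subseteq> {1..k} \<and>
      (\<forall>x\<in>X. \<forall>x'\<in>X. c x = c x' \<longrightarrow> ?lab x = ?lab x' \<and>
         (\<forall>y\<in>V1 \<union> V2 - X. (x,y) \<in> E1 \<union> E2 \<longleftrightarrow> (x',y) \<in> E1 \<union> E2)))"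
    proof (cases "X = V1 \<union> V2")
      case True
      then show ?thesis using labs by (intro conjI exI[of _ ?lab]) auto
    next
      case False
      then have "X \<in> F1 \<or> X \<in> F2" using X by auto
      then show ?thesis
      proof
        assume XF: "X \<in> F1"
        obtain c where XV: "X \<subseteq> V1" and c: "c ` X \<subseteq> {1..k}"
          and cl: "\<And>x x'. x \<in> X \<Longrightarrow> x' \<in> X \<Longrightarrow> c x = c x' \<Longrightarrow> lab1 x = lab1 x'"
          and ce: "\<And>x x' y. x \<in> X \<Longrightarrow> x' \<in> X \<Longrightarrow> c x = c x' \<Longrightarrow> y \<in> V1 - X \<Longrightarrow> (x,y) \<in> E1 \<longleftrightarrow> (x',y) \<in> E1"
          using twinfamD[OF F1(2) XF] by blast
        have E2V: "E2 \<subseteq> V2 \<times> V2" using union.IH by auto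
        have E1V: "E1 \<subseteq> V1 \<times> V1" using union.IH by auto
        show ?thesis
        proof (intro conjI exI[of _ c] ballI impI)
          show "X \<subseteq> V1 \<union> V2" using XV by auto
          show "c ` X \<subseteq> {1..k}" by (rule c(1))
        next
          fix x x' assume h: "x \<in> X" "x' \<in> X" "c x = c x'"
          have "x \<in> V1" "x' \<in> V1" using h XV by auto
          then show "?lab x = ?lab x'" using cl[OF h] by simp
        next
          fix x x' y assume h: "x \<in> X" "x' \<in> X" "c x = c x'" "y \<in> V1 \<union> V2 - X"
          have xx: "x \<in> V1" "x' \<in> V1" "x \<notin> V2" "x' \<notin> V2" using h XV union.hyps(3) by auto
          show "(x,y) \<in> E1 \<union> E2 \<longleftrightarrow> (x',y) \<in> E1 \<union> E2"
          proof (cases "y \<in> V1")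
            case True
            then have "(x,y) \<in> E1 \<longleftrightarrow> (x',y) \<in> E1" using ce[OF h(1-3)] h(4) by auto
            then show ?thesis using xx E2V by auto
          next
            case False
            then show ?thesis using xx E1V E2V by auto
          qed
        qed
      next
        assume XF: "X \<in> F2"
        obtain c where XV: "X \<subseteq> V2" and c: "c ` X \<subseteq> {1..k}"
          and cl: "\<And>x x'. x \<in> X \<Longrightarrow> x' \<in> X \<Longrightarrow> c x = c x' \<Longrightarrow> lab2 x = lab2 x'"
          and ce: "\<And>x x' y. x \<in> X \<Longrightarrow> x' \<in> X \<Longrightarrow> c x = c x' \<Longrightarrow> y \<in> V2 - X \<Longrightarrow> (x,y) \<in> E2 \<longleftrightarrow> (x',y) \<in> E2"
          using twinfamD[OF F2(2) XF] by blast
        have E2V: "E2 \<subseteq> V2 \<times> V2" using union.IH by auto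
        have E1V: "E1 \<subseteq> V1 \<times> V1" using union.IH by auto
        show ?thesis
        proof (intro conjI exI[of _ c] ballI impI)
          show "X \<subseteq> V1 \<union> V2" using XV by auto
          show "c ` X \<subseteq> {1..k}" by (rule c(1))
        next
          fix x x' assume h: "x \<in> X" "x' \<in> X" "c x = c x'"
          have xx: "x \<notin> V1" "x' \<notin> V1" using h XV union.hyps(3) by auto
          then show "?lab x = ?lab x'" using cl[OF h] by simp
        next
          fix x x' y assume h: "x \<in> X" "x' \<in> X" "c x = c x'" "y \<in> V1 \<union> V2 - X"
          have xx: "x \<in> V2" "x' \<in> V2" "x \<notin> V1" "x' \<notin> V1" using h XV union.hyps(3) by auto
          show "(x,y) \<in> E1 \<union> E2 \<longleftrightarrow> (x',y) \<in> E1 \<union> E2"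
          proof (cases "y \<in> V2")
            case True
            then have "(x,y) \<in> E2 \<longleftrightarrow> (x',y) \<in> E2" using ce[OF h(1-3)] h(4) by auto
            then show ?thesis using xx E1V by auto
          next
            case False
            then show ?thesis using xx E1V E2V by auto
          qed
        qed
      qed
    qed
  qed
  have bal: "balfam (V1 \<union> V2) ?F" unfolding balfam_def
  proof (intro allI impI)
    fix W and m :: real
    assume h: "3/2 \<le> m \<and> m/3 \<le> real (card (W \<inter> (V1 \<union> V2)))"
    show "\<exists>X\<in>?F. m/3 \<le> real (card (W \<inter> X)) \<and> real (card (W \<inter> X)) \<le> 2*m/3"
    proof (cases "real (card (W \<inter> (V1 \<union> V2))) \<le> 2*m/3")
      case True
      then show ?thesis using h by blast
    next
      case False
      have f1: "finite V1" "finite V2" using union.IH by auto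
      have "W \<inter> (V1 \<union> V2) = (W \<inter> V1) \<union> (W \<inter> V2)" by auto
      moreover have "(W \<inter> V1) \<inter> (W \<inter> V2) = {}" using union.hyps(3) by auto
      ultimately have "card (W \<inter> (V1 \<union> V2)) = card (W \<inter> V1) + card (W \<inter> V2)"
        using f1 by (simp add: card_Un_disjoint)
      then have "real (card (W \<inter> V1)) \<ge> m/3 \<or> real (card (W \<inter> V2)) \<ge> m/3"
        using False by linarith
      then show ?thesis
      proof
        assume "real (card (W \<inter> V1)) \<ge> m/3"
        then obtain X where "X \<in> F1" "m/3 \<le> real (card (W \<inter> X)) \<and> real (card (W \<inter> X)) \<le> 2*m/3"
          using F1(3) h unfolding balfam_def by blast
        then show ?thesis by blast
      next
        assume "real (card (W \<inter> V2)) \<ge> m/3"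
        then obtain X where "X \<in> F2" "m/3 \<le> real (card (W \<inter> X)) \<and> real (card (W \<inter> X)) \<le> 2*m/3"
          using F2(3) h unfolding balfam_def by blast
        then show ?thesis by blast
      qed
    qed
  qed
  show ?case using fin Esub labs tw bal by blast
next
  case (relabel V E lab i j)
  from relabel.IH obtain F where F: "V \<in> F" "twinfam k V E lab F" "balfam V F" by blast
  let ?lab = "\<lambda>x. if lab x = i then j else lab x"
  have "twinfam k V E ?lab F"
  proof (rule twinfamI)
    fix X assume XF: "X \<in> F"
    obtain c where XV: "X \<subseteq> V" and c: "c ` X \<subseteq> {1..k}"
      and cl: "\<And>x x'. x \<in> X \<Longrightarrow> x' \<in> X \<Longrightarrow> c x = c x' \<Longrightarrow> lab x = lab x'"
      and ce: "\<And>x x' y. x \<in> X \<Longrightarrow> x' \<in> X \<Longrightarrow> c x = c x' \<Longrightarrow> y \<in> V - X \<Longrightarrow> (x,y) \<in> E \<longleftrightarrow> (x',y) \<in> E"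
      using twinfamD[OF F(2) XF] by blast
    show "X \<subseteq> V \<and> (\<exists>c. c ` X \<subseteq> {1..k} \<and> (\<forall>x\<in>X. \<forall>x'\<in>X. c x = c x' \<longrightarrow> ?lab x = ?lab x' \<and>
        (\<forall>y\<in>V-X. (x,y) \<in> E \<longleftrightarrow> (x',y) \<in> E)))"
    proof (intro conjI exI[of _ c] ballI impI)
      fix x x' assume h: "x \<in> X" "x' \<in> X" "c x = c x'"
      show "?lab x = ?lab x'" using cl[OF h] by simp
    next
      fix x x' y assume h: "x \<in> X" "x' \<in> X" "c x = c x'" "y \<in> V - X"
      show "(x,y) \<in> E \<longleftrightarrow> (x',y) \<in> E" by (rule ce[OF h])
    qed (use XV c in auto)
  qed
  moreover have "?lab ` V \<subseteq> {1..k}" using relabel by auto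
  ultimately show ?case using relabel F by blast
next
  case (join V E lab i j)
  from join.IH obtain F where F: "V \<in> F" "twinfam k V E lab F" "balfam V F" by blast
  let ?E = "E \<union> {(x, y). x \<in> V \<and> y \<in> V \<and> ((lab x = i \<and> lab y = j) \<or> (lab x = j \<and> lab y = i))}"
  have "twinfam k V ?E lab F"
  proof (rule twinfamI)
    fix X assume XF: "X \<in> F"
    obtain c where XV: "X \<subseteq> V" and c: "c ` X \<subseteq> {1..k}"
      and cl: "\<And>x x'. x \<in> X \<Longrightarrow> x' \<in> X \<Longrightarrow> c x = c x' \<Longrightarrow> lab x = lab x'"
      and ce: "\<And>x x' y. x \<in> X \<Longrightarrow> x' \<in> X \<Longrightarrow> c x = c x' \<Longrightarrow> y \<in> V - X \<Longrightarrow> (x,y) \<in> E \<longleftrightarrow> (x',y) \<in> E"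
      using twinfamD[OF F(2) XF] by blast
    show "X \<subseteq> V \<and> (\<exists>c. c ` X \<subseteq> {1..k} \<and> (\<forall>x\<in>X. \<forall>x'\<in>X. c x = c x' \<longrightarrow> lab x = lab x' \<and>
        (\<forall>y\<in>V-X. (x,y) \<in> ?E \<longleftrightarrow> (x',y) \<in> ?E)))"
    proof (intro conjI exI[of _ c] ballI impI)
      fix x x' assume "x \<in> X" "x' \<in> X" "c x = c x'"
      then show "lab x = lab x'" using cl by blast
    next
      fix x x' y assume h: "x \<in> X" "x' \<in> X" "c x = c x'" "y \<in> V - X"
      have "lab x = lab x'" "(x,y) \<in> E \<longleftrightarrow> (x',y) \<in> E" using cl[OF h(1-3)] ce[OF h] by auto
      then show "(x,y) \<in> ?E \<longleftrightarrow> (x',y) \<in> ?E" using h XV by auto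
    qed (use XV c in auto)
  qed
  moreover have "?E \<subseteq> V \<times> V" using join by auto
  ultimately show ?case using join F by blast
qed



definition guide :: "('a \<times> 'a) set \<Rightarrow> 'a set \<Rightarrow> ('a \<times> 'a) set \<Rightarrow> bool" where
  "guide E W H \<longleftrightarrow> (\<forall>u v l. (u,v) \<in> (ER E W)^^l \<and> l \<ge> 1 \<longrightarrow>
     (\<exists>a b. a + b + 1 \<le> l \<and> (\<exists>x\<in>out_ball H u a. \<exists>y\<in>out_ball H v b. (x,y) \<in> E)))"

lemma reach_ball:
  assumes "(u,x) \<in> R^^p" "x \<in> S" "bfs R S \<subseteq> H"
  shows "\<exists>s\<in>S. s \<in> out_ball H u p"
proof -
  obtain s i where s: "s \<in> S" "i \<le> p" "(u,s) \<in> (bfs R S)^^i"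
    using bfs_reach[OF assms(1,2)] by blast
  have "(u,s) \<in> H^^i" using s(3) relpow_mono'[OF assms(3)] by blast
  then have "s \<in> out_ball H u p" unfolding out_ball_def using s(2) by blast
  then show ?thesis using s(1) by blast
qed

lemma ER_mono: "A \<subseteq> W \<Longrightarrow> ER E A \<subseteq> ER E W"
  unfolding ER_def by auto

lemma main:
  assumes sg: "simple_graph V E" and tw: "twinfam k V E lab F" and bal: "balfam V F"
  shows "W \<subseteq> V \<Longrightarrow> \<exists>H. H \<subseteq> ER E W \<and>
     (\<forall>w. real (outdeg H w) \<le> (2 / ln (3/2)) * real k * ln (real (card W))) \<and> guide E W H"
proof (induction "card W" arbitrary: W rule: less_induct)
  case less
  have finV: "finite V" and EV: "E \<subseteq> V \<times> V" and symE: "sym E" and irr: "irrefl E"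
    using sg unfolding simple_graph_def by auto
  have finW: "finite W" using less.prems finV finite_subset by blast
  show ?case
  proof (cases "card W \<le> 1")
    case True
    have ERe: "ER E W = {}"
    proof (rule ccontr)
      assume "ER E W \<noteq> {}"
      then obtain x y where "(x,y) \<in> E" "x \<in> W" "y \<in> W" unfolding ER_def by auto
      moreover have "x \<noteq> y" using \<open>(x,y) \<in> E\<close> irr unfolding irrefl_def by auto
      ultimately show False using True card_le_Suc0_iff_eq[OF finW] by auto
    qed
    have ln0: "ln (real (card W)) = 0"
    proof (cases "card W = 0")
      case True then show ?thesis by simp
    next
      case False then have "card W = 1" using \<open>card W \<le> 1\<close> by linarith
      then show ?thesis by simp
    qed
    have "guide E W {}" unfolding guide_def
    proof (intro allI impI)
      fix u v l assume h: "(u, v) \<in> (ER E W)^^l \<and> 1 \<le> l"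
      then have "(u,v) \<in> ({}::('a\<times>'a) set)^^l" using ERe by simp
      then show "\<exists>a b. a + b + 1 \<le> l \<and> (\<exists>x\<in>out_ball {} u a. \<exists>y\<in>out_ball {} v b. (x, y) \<in> E)"
        using h relpow_empty[of l] by auto
    qed
    moreover have "\<forall>w. real (outdeg {} w) \<le> (2 / ln (3/2)) * real k * ln (real (card W))"
      unfolding outdeg_def ln0 by simp
    ultimately show ?thesis by blast
  next
    case False
    define m where "m = real (card W)"
    have m2: "m \<ge> 2" using False unfolding m_def by simp
    have "card (W \<inter> V) = card W" using less.prems by (simp add: Int_absorb2)
    then have "3/2 \<le> m \<and> m/3 \<le> real (card (W \<inter> V))" using m2 unfolding m_def by simp
    then have "\<exists>X\<in>F. m/3 \<le> real (card (W \<inter> X)) \<and> real (card (W \<inter> X)) \<le> 2*m/3"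
      by (rule bal[unfolded balfam_def, rule_format])
    then obtain X where XF: "X \<in> F" and Xb: "m/3 \<le> real (card (W \<inter> X))" "real (card (W \<inter> X)) \<le> 2*m/3"
      by blast
    obtain c where XV: "X \<subseteq> V" and cr: "c ` X \<subseteq> {1..k}"
      and cl: "\<And>x x'. x \<in> X \<Longrightarrow> x' \<in> X \<Longrightarrow> c x = c x' \<Longrightarrow> lab x = lab x'"
      and ce: "\<And>x x' y. x \<in> X \<Longrightarrow> x' \<in> X \<Longrightarrow> c x = c x' \<Longrightarrow> y \<in> V - X \<Longrightarrow> (x,y) \<in> E \<longleftrightarrow> (x',y) \<in> E"
      using twinfamD[OF tw XF] by blast
    define A where "A = W \<inter> X"
    define B where "B = W - X"
    have cardAB: "card W = card A + card B" unfolding A_def B_def using card_Int_Diff[OF finW] .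
    have Ab: "m/3 \<le> real (card A)" "real (card A) \<le> 2*m/3" using Xb unfolding A_def by auto
    have Bb: "m/3 \<le> real (card B)" "real (card B) \<le> 2*m/3" using Ab cardAB unfolding m_def by auto
    have AltW: "card A < card W" and BltW: "card B < card W" using Ab Bb m2 unfolding m_def by auto
    have AsubV: "A \<subseteq> V" and BsubV: "B \<subseteq> V" using less.prems unfolding A_def B_def by auto
    obtain HA where HA: "HA \<subseteq> ER E A"
      "\<forall>w. real (outdeg HA w) \<le> (2 / ln (3/2)) * real k * ln (real (card A))" "guide E A HA"
      using less.hyps[OF AltW AsubV] by blast
    obtain HB where HB: "HB \<subseteq> ER E B"
      "\<forall>w. real (outdeg HB w) \<le> (2 / ln (3/2)) * real k * ln (real (card B))" "guide E B HB"
      using less.hyps[OF BltW BsubV] by blast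
    define R where "R = ER E W"
    define S1 where "S1 j = {x \<in> A. c x = j}" for j
    define S2 where "S2 j = {y \<in> B. \<forall>x\<in>X. c x = j \<longrightarrow> (x,y) \<in> E}" for j
    define HF where "HF = (\<Union>j\<in>{1..k}. bfs R (S1 j) \<union> bfs R (S2 j))"
    define H where "H = HA \<union> HB \<union> HF"
    have AW: "A \<subseteq> W" and BW: "B \<subseteq> W" unfolding A_def B_def by auto
    have Hsub: "H \<subseteq> ER E W"
      unfolding H_def HF_def using HA(1) HB(1) ER_mono[OF AW] ER_mono[OF BW] bfs_sub[of R] R_def by blast
    have lnpos: "ln (3/2::real) > 0" by simp
    have Apos: "card A > 0" and Bpos: "card B > 0" using Ab Bb m2 by auto
    have lnA: "ln (real (card A)) \<le> ln m - ln (3/2)"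
    proof -
      have "ln (real (card A)) \<le> ln (2*m/3)" using Ab Apos by simp
      also have "ln (2*m/3) = ln m - ln (3/2)" using m2 by (simp add: ln_div ln_mult)
      finally show ?thesis .
    qed
    have lnB: "ln (real (card B)) \<le> ln m - ln (3/2)"
    proof -
      have "ln (real (card B)) \<le> ln (2*m/3)" using Bb Bpos by simp
      also have "ln (2*m/3) = ln m - ln (3/2)" using m2 by (simp add: ln_div ln_mult)
      finally show ?thesis .
    qed
    have degbound: "\<forall>w. real (outdeg H w) \<le> (2 / ln (3/2)) * real k * ln (real (card W))"
    proof
      fix w :: 'a
      let ?o = "\<lambda>G::('a \<times> 'a) set. {v. (w,v) \<in> G}"
      have finout: "finite (?o G)" if "G \<subseteq> ER E W" for G
      proof -
        have "?o G \<subseteq> W" using that unfolding ER_def by auto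
        then show ?thesis using finW finite_subset by blast
      qed
      have oH: "?o H = ?o HA \<union> ?o HB \<union> ?o HF" unfolding H_def by auto
      have oHF: "?o HF = (\<Union>j\<in>{1..k}. ?o (bfs R (S1 j)) \<union> ?o (bfs R (S2 j)))" unfolding HF_def by auto
      have "card (?o HF) \<le> (\<Sum>j\<in>{1..k}. card (?o (bfs R (S1 j)) \<union> ?o (bfs R (S2 j))))"
        unfolding oHF by (rule card_UN_le) simp
      also have "\<dots> \<le> (\<Sum>j\<in>{1..k}. 2)"
      proof (rule sum_mono)
        fix j
        have "card (?o (bfs R (S1 j)) \<union> ?o (bfs R (S2 j))) \<le> card (?o (bfs R (S1 j))) + card (?o (bfs R (S2 j)))"
          by (rule card_Un_le)
        also have "\<dots> \<le> 2" using bfs_out[of w R "S1 j"] bfs_out[of w R "S2 j"] by linarith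
        finally show "card (?o (bfs R (S1 j)) \<union> ?o (bfs R (S2 j))) \<le> 2" .
      qed
      finally have cHF: "card (?o HF) \<le> 2 * k" by simp
      have cH: "card (?o H) \<le> card (?o HA) + card (?o HB) + card (?o HF)"
        unfolding oH by (meson card_Un_le add_le_mono le_trans order_refl)
      have "real (outdeg H w) \<le> (2 / ln (3/2)) * real k * (ln m - ln (3/2)) + 2 * real k"
      proof (cases "w \<in> A")
        case True
        then have "?o HB = {}" using HB(1) unfolding ER_def B_def A_def by auto
        then have "real (outdeg H w) \<le> real (outdeg HA w) + 2 * real k"
          using cH cHF unfolding outdeg_def by simp
        also have "\<dots> \<le> (2 / ln (3/2)) * real k * ln (real (card A)) + 2 * real k"
          using HA(2) by simp
        also have "\<dots> \<le> (2 / ln (3/2)) * real k * (ln m - ln (3/2)) + 2 * real k"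
          using lnA lnpos by (intro add_right_mono mult_left_mono) auto
        finally show ?thesis .
      next
        case False
        then have "?o HA = {}" using HA(1) unfolding ER_def by auto
        then have "real (outdeg H w) \<le> real (outdeg HB w) + 2 * real k"
          using cH cHF unfolding outdeg_def by simp
        also have "\<dots> \<le> (2 / ln (3/2)) * real k * ln (real (card B)) + 2 * real k"
          using HB(2) by simp
        also have "\<dots> \<le> (2 / ln (3/2)) * real k * (ln m - ln (3/2)) + 2 * real k"
          using lnB lnpos by (intro add_right_mono mult_left_mono) auto
        finally show ?thesis .
      qed
      also have "\<dots> = (2 / ln (3/2)) * real k * ln m"
        using lnpos by (simp add: field_simps)
      finally show "real (outdeg H w) \<le> (2 / ln (3/2)) * real k * ln (real (card W))"
        unfolding m_def .
    qed
    have symR: "sym R" using symE unfolding R_def ER_def sym_def by auto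
    have gd: "guide E W H" unfolding guide_def
    proof (intro allI impI)
      fix u v l assume h: "(u, v) \<in> (ER E W)^^l \<and> 1 \<le> l"
      then obtain l' where l': "l = Suc l'" by (cases l) auto
      then obtain z where "(u,z) \<in> ER E W" using h relpow_Suc_D2 by metis
      then have uW: "u \<in> W" unfolding ER_def by auto
      have AB: "A \<union> B = W" "A \<inter> B = {}" unfolding A_def B_def by auto
      show "\<exists>a b. a + b + 1 \<le> l \<and> (\<exists>x\<in>out_ball H u a. \<exists>y\<in>out_ball H v b. (x, y) \<in> E)"
      proof -
        from walk_split[OF AB uW conjunct1[OF h]] consider
          (a) "u \<in> A \<and> v \<in> A \<and> (u,v) \<in> (ER E A)^^l"
        | (b) "u \<in> B \<and> v \<in> B \<and> (u,v) \<in> (ER E B)^^l"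
        | (c) "\<exists>x y p q. (u,x) \<in> (ER E W)^^p \<and> (x,y) \<in> ER E W \<and> (y,v) \<in> (ER E W)^^q \<and> p+q+1 = l
             \<and> ((x \<in> A \<and> y \<in> B) \<or> (x \<in> B \<and> y \<in> A))" by blast
        then show ?thesis
        proof cases
          case a
          then obtain a b x y where ab: "a + b + 1 \<le> l" "x \<in> out_ball HA u a" "y \<in> out_ball HA v b" "(x,y) \<in> E"
            using HA(3) h unfolding guide_def by blast
          have "HA \<subseteq> H" unfolding H_def by auto
          then show ?thesis using ab out_ball_mono[of HA H] by blast
        next
          case b
          then obtain a b x y where ab: "a + b + 1 \<le> l" "x \<in> out_ball HB u a" "y \<in> out_ball HB v b" "(x,y) \<in> E"
            using HB(3) h unfolding guide_def by blast
          have "HB \<subseteq> H" unfolding H_def by auto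
          then show ?thesis using ab out_ball_mono[of HB H] by blast
        next
          case c
          then obtain x y p q where xy: "(u,x) \<in> R^^p" "(x,y) \<in> R" "(y,v) \<in> R^^q" "p+q+1 = l"
            "(x \<in> A \<and> y \<in> B) \<or> (x \<in> B \<and> y \<in> A)" unfolding R_def by blast
          have vy: "(v,y) \<in> R^^q" using relpow_sym[OF symR xy(3)] .
          have xyE: "(x,y) \<in> E" "(y,x) \<in> E" using xy(2) symE unfolding R_def ER_def sym_def by auto
          have sub1: "bfs R (S1 j) \<subseteq> H" and sub2: "bfs R (S2 j) \<subseteq> H" if "j \<in> {1..k}" for j
            using that unfolding H_def HF_def by auto
          have S12: "(s1, s2) \<in> E" if "s1 \<in> S1 j" "s2 \<in> S2 j" for s1 s2 j
            using that unfolding S1_def S2_def A_def by auto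
          from xy(5) show ?thesis
          proof
            assume xA: "x \<in> A \<and> y \<in> B"
            define j where "j = c x"
            have xX: "x \<in> X" using xA unfolding A_def by auto
            have j: "j \<in> {1..k}" using cr xX unfolding j_def by auto
            have x1: "x \<in> S1 j" using xA unfolding S1_def j_def by auto
            have yV: "y \<in> V - X" using xA BsubV unfolding B_def by auto
            have y2: "y \<in> S2 j" unfolding S2_def
            proof (intro CollectI conjI ballI impI)
              show "y \<in> B" using xA by auto
              fix x' assume "x' \<in> X" "c x' = j"
              then show "(x',y) \<in> E" using ce[OF xX \<open>x' \<in> X\<close> _ yV] xyE(1) unfolding j_def by auto
            qed
            obtain s1 where s1: "s1 \<in> S1 j" "s1 \<in> out_ball H u p"
              using reach_ball[OF xy(1) x1 sub1[OF j]] by blast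
            obtain s2 where s2: "s2 \<in> S2 j" "s2 \<in> out_ball H v q"
              using reach_ball[OF vy y2 sub2[OF j]] by blast
            show ?thesis using s1 s2 S12[OF s1(1) s2(1)] xy(4) by (intro exI[of _ p] exI[of _ q]) auto
          next
            assume yA: "x \<in> B \<and> y \<in> A"
            define j where "j = c y"
            have yX: "y \<in> X" using yA unfolding A_def by auto
            have j: "j \<in> {1..k}" using cr yX unfolding j_def by auto
            have y1: "y \<in> S1 j" using yA unfolding S1_def j_def by auto
            have xV: "x \<in> V - X" using yA BsubV unfolding B_def by auto
            have x2: "x \<in> S2 j" unfolding S2_def
            proof (intro CollectI conjI ballI impI)
              show "x \<in> B" using yA by auto
              fix x' assume "x' \<in> X" "c x' = j"
              then show "(x',x) \<in> E" using ce[OF yX \<open>x' \<in> X\<close> _ xV] xyE(2) unfolding j_def by auto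
            qed
            obtain s2 where s2: "s2 \<in> S2 j" "s2 \<in> out_ball H u p"
              using reach_ball[OF xy(1) x2 sub2[OF j]] by blast
            obtain s1 where s1: "s1 \<in> S1 j" "s1 \<in> out_ball H v q"
              using reach_ball[OF vy y1 sub1[OF j]] by blast
            have "(s2, s1) \<in> E" using S12[OF s1(1) s2(1)] symE unfolding sym_def by blast
            then show ?thesis using s1 s2 xy(4) by (intro exI[of _ p] exI[of _ q]) auto
          qed
        qed
      qed
    qed
    show ?thesis using Hsub degbound gd by blast
  qed
qed


theorem corollary35:
  "\<exists>C::real. C > 0 \<and>
     (\<forall>(k::nat) (n::nat) (V::nat set) E.
        simple_graph V E \<and> card V = n \<and> n \<ge> 1 \<and> cw_at_most k V E \<longrightarrow>
        (\<exists>H. partial_orientation E H \<and> weak_inf_guidance V E H \<and>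
             (\<forall>u\<in>V. real (outdeg H u) \<le> C * real k * ln (real n))))"
proof (intro exI[of _ "2 / ln (3/2)"] conjI allI impI)
  show "(0::real) < 2 / ln (3/2)" by simp
next
  fix k n :: nat and V :: "nat set" and E
  assume h: "simple_graph V E \<and> card V = n \<and> n \<ge> 1 \<and> cw_at_most k V E"
  then obtain lab where cw: "cw_constructible k V E lab" unfolding cw_at_most_def by blast
  from cw_family[OF cw] obtain F where F: "twinfam k V E lab F" "balfam V F" by blast
  have sg: "simple_graph V E" using h by blast
  have EV: "E \<subseteq> V \<times> V" and symE: "sym E" using sg unfolding simple_graph_def by auto
  have ERV: "ER E V = E" using EV unfolding ER_def by auto
  obtain H where H: "H \<subseteq> ER E V"
     "\<forall>w. real (outdeg H w) \<le> (2 / ln (3/2)) * real k * ln (real (card V))" "guide E V H"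
    using main[OF sg F(1) F(2) order_refl] by blast
  have po: "partial_orientation E H" unfolding partial_orientation_def using H(1) ERV by simp
  have wg: "weak_inf_guidance V E H" unfolding weak_inf_guidance_def weak_guidance_def
  proof (intro allI impI conjI po ballI)
    fix r u v l
    assume uv: "u \<noteq> v \<and> at_dist E u v l \<and> l \<le> r"
    then have p: "(u,v) \<in> E^^l" unfolding at_dist_def by blast
    have l1: "l \<ge> 1"
    proof (rule ccontr)
      assume "\<not> l \<ge> 1"
      then have "l = 0" by simp
      then show False using p uv by simp
    qed
    have "(u,v) \<in> (ER E V)^^l" using p ERV by simp
    then obtain a b x y where ab: "a + b + 1 \<le> l" "x \<in> out_ball H u a" "y \<in> out_ball H v b" "(x,y) \<in> E"
      using H(3) l1 unfolding guide_def by blast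
    have "x \<in> out_ball H u (l - 1 - b)" using out_ball_mono[OF order_refl _ ab(2)] ab(1) by simp
    then show "\<exists>a b. a + b = l - 1 \<and> (\<exists>x\<in>out_ball H u a. \<exists>y\<in>out_ball H v b. (x, y) \<in> E)"
      using ab(1,3,4) by (intro exI[of _ "l - 1 - b"] exI[of _ b]) auto
  qed
  have "card V = n" using h by blast
  then show "\<exists>H. partial_orientation E H \<and> weak_inf_guidance V E H \<and>
             (\<forall>u\<in>V. real (outdeg H u) \<le> 2 / ln (3/2) * real k * ln (real n))"
    using po wg H(2) by blast
qed

end
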